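(* Let $V$ be a real vector space of dimension $n$, $1\le k\le n-1$, and let $L\subseteq V\oplus\wedge^kV^*$ be a weakly lagrangian subspace with $L\cap\wedge^kV^*=\{0\}$. Then $L=\{X+\varepsilon(X)\mid X\in E\}$ where $E=\mathrm{pr}_1(L)$ and $\varepsilon:E\to\wedge^kV^*$ is a linear $E$-skew map satisfying $\mathrm{Im}(\varepsilon)^\circ=\ker(\varepsilon)$. Moreover, $L$ is lagrangian if and only if $E=V$.
   Context: On $V\oplus\wedge^kV^*$ consider the $\wedge^{k-1}V^*$-valued pairing $\langle X+\alpha,Y+\beta\rangle=i_X\beta+i_Y\alpha$; $L^\perp$ denotes the orthogonal of $L$. $L$ is isotropic if $L\subseteq L^\perp$ and lagrangian if $L=L^\perp$. $\mathrm{pr}_1,\mathrm{pr}_2$ are the projections onto $V$ and $\wedge^kV^*$. For a subspace $S\subseteq\wedge^kV^*$, $S^\circ=\{X\in V\mid i_X\eta=0\ \forall \eta\in S\}$. A subspace $L$ is weakly lagrangian if it is isotropic and $L\cap V=\mathrm{pr}_2(L)^\circ$. A linear map $\varepsilon:E\to\wedge^kV^*$ is $E$-skew if $i_Y\varepsilon(X)=-i_X\varepsilon(Y)$ for all $X,Y\in E$. *)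

theory Defs
  imports "HOL-Analysis.Analysis"
begin

text \<open>The real vector space V is the whole type 'v (finite dimensional, dimension DIM('v)).
  A k-form on V is represented as a function on lists of vectors which is zero on lists
  of length different from k, and which is multilinear and alternating on lists of length k.\<close>

type_synonym 'v form = "'v list \<Rightarrow> real"

definition is_kform :: "nat \<Rightarrow> ('v::real_vector) form \<Rightarrow> bool" where
  "is_kform k \<eta> \<longleftrightarrow>
     (\<forall>xs. length xs \<noteq> k \<longrightarrow> \<eta> xs = 0) \<and>
     (\<forall>xs i. length xs = k \<and> i < k \<longrightarrow> linear (\<lambda>v. \<eta> (xs[i := v]))) \<and>
     (\<forall>xs i j. length xs = k \<and> i < j \<and> j < k \<and> xs ! i = xs ! j \<longrightarrow> \<eta> xs = 0)"

definition kforms :: "nat \<Rightarrow> ('v::real_vector) form set" where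
  "kforms k = {\<eta>. is_kform k \<eta>}"

definition fzero :: "'v form" where "fzero = (\<lambda>xs. 0)"
definition fadd :: "'v form \<Rightarrow> 'v form \<Rightarrow> 'v form" where "fadd \<eta> \<theta> = (\<lambda>xs. \<eta> xs + \<theta> xs)"
definition fscale :: "real \<Rightarrow> 'v form \<Rightarrow> 'v form" where "fscale c \<eta> = (\<lambda>xs. c * \<eta> xs)"
definition fneg :: "'v form \<Rightarrow> 'v form" where "fneg \<eta> = (\<lambda>xs. - \<eta> xs)"

definition ins :: "'v \<Rightarrow> 'v form \<Rightarrow> 'v form" where
  "ins X \<eta> = (\<lambda>xs. \<eta> (X # xs))"

text \<open>Elements of V \<oplus> \<wedge>^k V^* are pairs (X, alpha).\<close>
definition pairing :: "('v \<times> 'v form) \<Rightarrow> ('v \<times> 'v form) \<Rightarrow> 'v form" where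
  "pairing a b = fadd (ins (fst a) (snd b)) (ins (fst b) (snd a))"

definition is_subspace :: "nat \<Rightarrow> (('v::real_vector) \<times> 'v form) set \<Rightarrow> bool" where
  "is_subspace k L \<longleftrightarrow> L \<subseteq> UNIV \<times> kforms k \<and> (0, fzero) \<in> L \<and>
     (\<forall>a\<in>L. \<forall>b\<in>L. (fst a + fst b, fadd (snd a) (snd b)) \<in> L) \<and>
     (\<forall>c. \<forall>a\<in>L. (c *\<^sub>R fst a, fscale c (snd a)) \<in> L)"

definition orth :: "nat \<Rightarrow> (('v::real_vector) \<times> 'v form) set \<Rightarrow> ('v \<times> 'v form) set" where
  "orth k L = {b \<in> UNIV \<times> kforms k. \<forall>a\<in>L. pairing a b = fzero}"

definition isotropic :: "nat \<Rightarrow> (('v::real_vector) \<times> 'v form) set \<Rightarrow> bool" where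
  "isotropic k L \<longleftrightarrow> L \<subseteq> orth k L"

definition lagrangian :: "nat \<Rightarrow> (('v::real_vector) \<times> 'v form) set \<Rightarrow> bool" where
  "lagrangian k L \<longleftrightarrow> L = orth k L"

definition pr1 :: "('v \<times> 'v form) set \<Rightarrow> 'v set" where "pr1 L = fst ` L"
definition pr2 :: "('v \<times> 'v form) set \<Rightarrow> 'v form set" where "pr2 L = snd ` L"

definition ann :: "'v form set \<Rightarrow> 'v set" where
  "ann S = {X. \<forall>\<eta>\<in>S. ins X \<eta> = fzero}"

text \<open>L \<inter> V, viewed as a subset of V.\<close>
definition capV :: "('v::zero \<times> 'v form) set \<Rightarrow> 'v set" where
  "capV L = {X. (X, fzero) \<in> L}"

definition weakly_lagrangian :: "nat \<Rightarrow> (('v::real_vector) \<times> 'v form) set \<Rightarrow> bool" where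
  "weakly_lagrangian k L \<longleftrightarrow> isotropic k L \<and> capV L = ann (pr2 L)"

definition linear_on :: "('v::real_vector) set \<Rightarrow> ('v \<Rightarrow> 'v form) \<Rightarrow> bool" where
  "linear_on E \<epsilon> \<longleftrightarrow> (\<forall>X\<in>E. \<forall>Y\<in>E. \<epsilon> (X + Y) = fadd (\<epsilon> X) (\<epsilon> Y)) \<and>
                      (\<forall>c. \<forall>X\<in>E. \<epsilon> (c *\<^sub>R X) = fscale c (\<epsilon> X))"

definition E_skew :: "'v set \<Rightarrow> ('v \<Rightarrow> 'v form) \<Rightarrow> bool" where
  "E_skew E \<epsilon> \<longleftrightarrow> (\<forall>X\<in>E. \<forall>Y\<in>E. ins Y (\<epsilon> X) = fneg (ins X (\<epsilon> Y)))"

end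

theory Submission
  imports Defs
begin

lemma kform_zero: "is_kform k \<eta> \<Longrightarrow> length xs \<noteq> k \<Longrightarrow> \<eta> xs = 0"
  by (simp add: is_kform_def)

lemma kform_lin: "is_kform k \<eta> \<Longrightarrow> length xs = k \<Longrightarrow> i < k \<Longrightarrow> linear (\<lambda>v. \<eta> (xs[i := v]))"
  by (simp add: is_kform_def)

lemma kform_alt: "is_kform k \<eta> \<Longrightarrow> length xs = k \<Longrightarrow> i < j \<Longrightarrow> j < k \<Longrightarrow> xs!i = xs!j \<Longrightarrow> \<eta> xs = 0"
  unfolding is_kform_def by blast

lemma kform_add_slot:
  assumes "is_kform k \<eta>" "length xs = k" "i < k"
  shows "\<eta> (xs[i := a + b]) = \<eta> (xs[i := a]) + \<eta> (xs[i := b])"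
  using kform_lin[OF assms] unfolding linear_iff by blast

lemma kform_swap:
  assumes k: "is_kform k \<eta>" and l: "length xs = k" and ij: "i < j" "j < k"
  shows "\<eta> (xs[i := a, j := b]) = - \<eta> (xs[i := b, j := a])"
proof -
  define f where "f u v = \<eta> (xs[i := u, j := v])" for u v
  have sw: "xs[i := u, j := v] = xs[j := v, i := u]" for u v
    using ij by (simp add: list_update_swap)
  have lu: "f (u + w) v = f u v + f w v" for u w v
    unfolding f_def sw using kform_add_slot[OF k, of "xs[j := v]" i u w] l ij by simp
  have lv: "f u (v + w) = f u v + f u w" for u w v
    unfolding f_def using kform_add_slot[OF k, of "xs[i := u]" j v w] l ij by simp
  have z: "f u u = 0" for u
    unfolding f_def using kform_alt[OF k, of "xs[i := u, j := u]" i j] l ij by simp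
  have "0 = f (a + b) (a + b)" using z by simp
  also have "\<dots> = f a (a + b) + f b (a + b)" by (rule lu)
  also have "\<dots> = (f a a + f a b) + (f b a + f b b)" by (simp only: lv)
  also have "\<dots> = f a b + f b a" using z by simp
  finally show ?thesis unfolding f_def by simp
qed

lemma kform_fzero: "is_kform k fzero"
  by (simp add: is_kform_def fzero_def linear_iff)

lemma kform_fadd: "is_kform k \<eta> \<Longrightarrow> is_kform k \<theta> \<Longrightarrow> is_kform k (fadd \<eta> \<theta>)"
  unfolding is_kform_def fadd_def linear_iff by (auto simp: algebra_simps)

lemma kform_fscale: "is_kform k \<eta> \<Longrightarrow> is_kform k (fscale c \<eta>)"
  unfolding is_kform_def fscale_def linear_iff by (auto simp: algebra_simps)

lemma kform_fneg: "is_kform k \<eta> \<Longrightarrow> is_kform k (fneg \<eta>)"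
  unfolding is_kform_def fneg_def linear_iff by (auto simp: algebra_simps)

lemma kform_ins:
  assumes k: "is_kform k \<eta>" and "1 \<le> k"
  shows "is_kform (k - 1) (ins X \<eta>)"
  unfolding is_kform_def ins_def
proof (intro conjI allI impI)
  fix xs :: "'a list" assume "length xs \<noteq> k - 1"
  then show "\<eta> (X # xs) = 0" using kform_zero[OF k] assms(2) by simp
next
  fix xs :: "'a list" and i assume a: "length xs = k - 1 \<and> i < k - 1"
  have "linear (\<lambda>v. \<eta> ((X # xs)[Suc i := v]))"
    using kform_lin[OF k, of "X # xs" "Suc i"] a assms(2) by (simp add: less_diff_conv)
  then show "linear (\<lambda>v. \<eta> (X # xs[i := v]))" by simp
next
  fix xs :: "'a list" and i j assume a: "length xs = k - 1 \<and> i < j \<and> j < k - 1 \<and> xs ! i = xs ! j"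
  show "\<eta> (X # xs) = 0"
    using kform_alt[OF k, of "X # xs" "Suc i" "Suc j"] a assms(2) by (simp add: less_diff_conv)
qed

lemma skew_self: "E_skew E \<theta> \<Longrightarrow> X \<in> E \<Longrightarrow> \<theta> X (X # zs) = 0"
  unfolding E_skew_def ins_def fneg_def
  by (drule bspec[of _ _ X], assumption, drule bspec[of _ _ X], assumption) (metis add.inverse_unique add_eq_0_iff2 neg_equal_zero)

lemma direct_form:
  assumes m: "1 \<le> m" and val: "\<And>X. is_kform (m - 1) (\<theta> X)"
    and lin: "linear_on UNIV \<theta>" and sk: "E_skew UNIV \<theta>"
  shows "is_kform m (\<lambda>xs. if length xs = m then \<theta> (hd xs) (tl xs) else 0)"
  unfolding is_kform_def
proof (intro conjI allI impI)
  fix xs :: "'a list" assume "length xs \<noteq> m" then show "(if length xs = m then \<theta> (hd xs) (tl xs) else 0) = 0" by simp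
next
  fix xs :: "'a list" and i assume a: "length xs = m \<and> i < m"
  then obtain x ys where xs: "xs = x # ys" using m by (cases xs) auto
  have ly: "length ys = m - 1" using a xs by auto
  show "linear (\<lambda>v. if length (xs[i := v]) = m then \<theta> (hd (xs[i := v])) (tl (xs[i := v])) else 0)"
  proof (cases i)
    case 0
    have "linear (\<lambda>v. \<theta> v ys)"
      using lin unfolding linear_on_def linear_iff fadd_def fscale_def by simp
    then show ?thesis using a by (simp add: xs 0)
  next
    case (Suc i')
    have "linear (\<lambda>v. \<theta> x (ys[i' := v]))"
      using kform_lin[OF val ly, of i'] a Suc ly by (simp add: less_diff_conv)
    then show ?thesis using a by (simp add: xs Suc)
  qed
next
  fix xs :: "'a list" and i j assume a: "length xs = m \<and> i < j \<and> j < m \<and> xs ! i = xs ! j"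
  then obtain x ys where xs: "xs = x # ys" using m by (cases xs) auto
  have ly: "length ys = m - 1" using a xs by auto
  obtain j' where j: "j = Suc j'" using a by (cases j) auto
  have "\<theta> x ys = 0"
  proof (cases i)
    case (Suc i')
    then show ?thesis using kform_alt[OF val ly, of i' j'] a xs j by (simp add: less_diff_conv)
  next
    case 0
    then have xj: "ys ! j' = x" using a xs j by simp
    show ?thesis
    proof (cases j')
      case 0
      then obtain zs where "ys = x # zs" using xj ly a j by (cases ys) auto
      then show ?thesis using skew_self[OF sk] by simp
    next
      case (Suc j'')
      have "\<theta> x ys = \<theta> x (ys[0 := ys ! 0, j' := ys ! j'])" by simp
      also have "\<dots> = - \<theta> x (ys[0 := ys ! j', j' := ys ! 0])"
        by (rule kform_swap[OF val ly]) (use Suc a j ly in auto)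
      also have "\<dots> = 0"
      proof -
        obtain z zs where "ys = z # zs" using ly a j by (cases ys) auto
        then show ?thesis using xj Suc skew_self[OF sk, of x] by simp
      qed
      finally show ?thesis .
    qed
  qed
  then show "(if length xs = m then \<theta> (hd xs) (tl xs) else 0) = 0" by (simp add: xs)
qed

lemma direct_ins:
  assumes m: "1 \<le> m" and val: "is_kform (m - 1) (\<theta> X)"
  shows "ins X (\<lambda>xs. if length xs = m then \<theta> (hd xs) (tl xs) else 0) = \<theta> X"
proof
  fix xs show "ins X (\<lambda>xs. if length xs = m then \<theta> (hd xs) (tl xs) else 0) xs = \<theta> X xs"
    using kform_zero[OF val, of xs] m unfolding ins_def by auto
qed

lemma slot0:
  assumes k: "is_kform k \<eta>"
  shows "\<eta> ((a + c *\<^sub>R b) # zs) = \<eta> (a # zs) + c * \<eta> (b # zs)"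
proof (cases "length (a # zs) = k")
  case True
  have "linear (\<lambda>v. \<eta> ((a # zs)[0 := v]))" using kform_lin[OF k True, of 0] True by simp
  then show ?thesis unfolding linear_iff by simp
next
  case False then show ?thesis using kform_zero[OF k] by simp
qed

lemma slot1:
  assumes k: "is_kform k \<eta>"
  shows "\<eta> (u # (a + c *\<^sub>R b) # zs) = \<eta> (u # a # zs) + c * \<eta> (u # b # zs)"
proof (cases "length (u # a # zs) = k")
  case True
  have "linear (\<lambda>v. \<eta> ((u # a # zs)[1 := v]))" using kform_lin[OF k True, of 1] True by simp
  then show ?thesis unfolding linear_iff by simp
next
  case False then show ?thesis using kform_zero[OF k] by simp
qed

lemma swap01:
  assumes k: "is_kform k \<eta>"
  shows "\<eta> (a # b # zs) = - \<eta> (b # a # zs)"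
proof (cases "length (a # b # zs) = k")
  case True
  have "\<eta> ((a # b # zs)[0 := a, 1 := b]) = - \<eta> ((a # b # zs)[0 := b, 1 := a])"
    by (rule kform_swap[OF k True]) (use True in auto)
  then show ?thesis by simp
next
  case False then show ?thesis using kform_zero[OF k] by simp
qed

lemma dup01:
  assumes k: "is_kform k \<eta>"
  shows "\<eta> (a # a # zs) = 0"
  using swap01[OF k, of a a zs] by simp

definition extP :: "nat \<Rightarrow> ('v::real_vector) set \<Rightarrow> ('v \<Rightarrow> 'v form) \<Rightarrow> bool" where
  "extP m E \<theta> \<longleftrightarrow> (subspace E \<longrightarrow> (\<forall>X\<in>E. is_kform (m - 1) (\<theta> X)) \<longrightarrow> linear_on E \<theta> \<longrightarrow> E_skew E \<theta> \<longrightarrow>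
     (\<exists>\<beta>. is_kform m \<beta> \<and> (\<forall>X\<in>E. ins X \<beta> = \<theta> X)))"

lemma lin0: "linear_on E \<theta> \<Longrightarrow> subspace E \<Longrightarrow> \<theta> 0 = fzero"
  unfolding linear_on_def fscale_def fzero_def
  by (metis mult_zero_left scale_zero_left subspace_0)

lemma ext_step:
  fixes E :: "'v::euclidean_space set" and \<theta> :: "'v \<Rightarrow> 'v form"
  assumes m: "1 \<le> m"
    and IH: "2 \<le> m \<Longrightarrow> \<forall>E' \<psi>. extP (m - 1) (E' :: 'v set) \<psi>"
    and E: "subspace E" and Y: "Y \<noteq> 0" "\<And>y. y \<in> E \<Longrightarrow> Y \<bullet> y = 0"
    and val: "\<forall>X\<in>E. is_kform (m - 1) (\<theta> X)" and lin: "linear_on E \<theta>" and sk: "E_skew E \<theta>"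
  shows "\<exists>\<theta>'. (\<forall>X\<in>span (insert Y E). is_kform (m - 1) (\<theta>' X)) \<and> linear_on (span (insert Y E)) \<theta>'
          \<and> E_skew (span (insert Y E)) \<theta>' \<and> (\<forall>X\<in>E. \<theta>' X = \<theta> X)"
proof -
  define E' where "E' = span (insert Y E)"
  define t where "t x = (x \<bullet> Y) / (Y \<bullet> Y)" for x
  define p where "p x = x - t x *\<^sub>R Y" for x
  have YY: "Y \<bullet> Y \<noteq> 0" using Y by simp
  have tadd: "t (x + y) = t x + t y" for x y unfolding t_def by (simp add: inner_add_left add_divide_distrib)
  have tscale: "t (c *\<^sub>R x) = c * t x" for c x unfolding t_def by simp
  have padd: "p (x + y) = p x + p y" for x y unfolding p_def tadd by (simp add: algebra_simps)
  have pscale: "p (c *\<^sub>R x) = c *\<^sub>R p x" for c x unfolding p_def tscale by (simp add: algebra_simps)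
  have tE: "t x = 0" if "x \<in> E" for x using Y(2)[OF that] unfolding t_def by (simp add: inner_commute)
  have pE: "p x = x" if "x \<in> E" for x using tE[OF that] unfolding p_def by simp
  have tY: "t Y = 1" unfolding t_def using YY by simp
  have pY: "p Y = 0" unfolding p_def tY by simp
  have decomp: "x = p x + t x *\<^sub>R Y" for x unfolding p_def by simp
  have pE': "p x \<in> E" if xE: "x \<in> E'" for x
  proof -
    have "\<exists>c. x - c *\<^sub>R Y \<in> span E" using xE unfolding E'_def span_breakdown_eq .
    then obtain c where c: "x - c *\<^sub>R Y \<in> E" using span_eq_iff[THEN iffD2, OF E] by auto
    have "t x = c" using tE[OF c] YY unfolding t_def by (simp add: inner_diff_left field_simps)
    then show ?thesis using c unfolding p_def by simp
  qed
  have E'sub: "subspace E'" unfolding E'_def by simp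
  have EE': "E \<subseteq> E'" unfolding E'_def by (meson span_superset subset_insertI subset_trans)
  have YE': "Y \<in> E'" unfolding E'_def by (simp add: span_base)
  have th0: "\<theta> 0 = fzero" by (rule lin0[OF lin E])
  have linadd: "\<theta> (a + b) = fadd (\<theta> a) (\<theta> b)" if "a \<in> E" "b \<in> E" for a b
    using lin that unfolding linear_on_def by blast
  have linscale: "\<theta> (c *\<^sub>R a) = fscale c (\<theta> a)" if "a \<in> E" for a c
    using lin that unfolding linear_on_def by blast
  have skE: "\<theta> a (b # zs) = - \<theta> b (a # zs)" if "a \<in> E" "b \<in> E" for a b zs
  proof -
    have "ins b (\<theta> a) = fneg (ins a (\<theta> b))" using sk that unfolding E_skew_def by blast
    then show ?thesis unfolding ins_def fneg_def by (metis)
  qed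
  have valp: "is_kform (m - 1) (\<theta> (p x))" if "x \<in> E'" for x using val pE'[OF that] by blast
  obtain \<gamma> where g1: "is_kform (m - 1) \<gamma>" and g2: "ins Y \<gamma> = fzero"
    and g3: "\<And>X. X \<in> E \<Longrightarrow> ins X \<gamma> = fneg (ins Y (\<theta> X))"
  proof (cases "m = 1")
    case True
    show ?thesis
    proof (rule that[of fzero])
      show "is_kform (m - 1) fzero" by (rule kform_fzero)
      show "ins Y fzero = fzero" by (simp add: ins_def fzero_def)
      fix X assume X: "X \<in> E"
      show "ins X fzero = fneg (ins Y (\<theta> X))"
        using kform_zero[OF val[rule_format, OF X]] True
        by (auto simp: ins_def fzero_def fneg_def)
    qed
  next
    case False
    then have m2: "2 \<le> m" using m by simp
    define \<psi> where "\<psi> x = fneg (ins Y (\<theta> (p x)))" for x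
    have ex: "extP (m - 1) E' \<psi>" using IH[OF m2] by blast
    have v\<psi>: "\<forall>X\<in>E'. is_kform (m - 1 - 1) (\<psi> X)"
    proof
      fix X assume X: "X \<in> E'"
      have "1 \<le> m - 1" using m2 by simp
      then show "is_kform (m - 1 - 1) (\<psi> X)" unfolding \<psi>_def
        by (intro kform_fneg kform_ins valp X)
    qed
    have l\<psi>: "linear_on E' \<psi>"
      unfolding linear_on_def
    proof (intro conjI ballI allI)
      fix a b assume a: "a \<in> E'" and b: "b \<in> E'"
      show "\<psi> (a + b) = fadd (\<psi> a) (\<psi> b)"
        unfolding \<psi>_def padd linadd[OF pE'[OF a] pE'[OF b]]
        by (simp add: fneg_def ins_def fadd_def)
    next
      fix c a assume a: "a \<in> E'"
      show "\<psi> (c *\<^sub>R a) = fscale c (\<psi> a)"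
        unfolding \<psi>_def pscale linscale[OF pE'[OF a]]
        by (simp add: fneg_def ins_def fscale_def)
    qed
    have s\<psi>: "E_skew E' \<psi>"
      unfolding E_skew_def
    proof (intro ballI ext)
      fix a b zs assume a: "a \<in> E'" and b: "b \<in> E'"
      have "\<theta> (p a) (Y # b # zs) = \<theta> (p a) (Y # p b # zs) + t b * \<theta> (p a) (Y # Y # zs)"
        using slot1[OF valp[OF a], of Y "p b" "t b" Y zs] decomp[of b] by simp
      also have "\<dots> = \<theta> (p a) (Y # p b # zs)" using dup01[OF valp[OF a]] by simp
      also have "\<dots> = - \<theta> (p a) (p b # Y # zs)" by (rule swap01[OF valp[OF a]])
      also have "\<dots> = \<theta> (p b) (p a # Y # zs)" using skE[OF pE'[OF a] pE'[OF b]] by simp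
      also have "\<dots> = - \<theta> (p b) (Y # p a # zs)" by (rule swap01[OF valp[OF b]])
      also have "\<dots> = - \<theta> (p b) (Y # a # zs)"
        using slot1[OF valp[OF b], of Y "p a" "t a" Y zs] decomp[of a] dup01[OF valp[OF b]] by simp
      finally have "\<theta> (p a) (Y # b # zs) = - \<theta> (p b) (Y # a # zs)" .
      then show "ins b (\<psi> a) zs = fneg (ins a (\<psi> b)) zs"
        unfolding \<psi>_def by (simp add: fneg_def ins_def)
    qed
    obtain \<gamma> where "is_kform (m - 1) \<gamma>" "\<forall>X\<in>E'. ins X \<gamma> = \<psi> X"
      using ex E'sub v\<psi> l\<psi> s\<psi> unfolding extP_def by blast
    then show ?thesis
      apply (intro that[of \<gamma>])
        apply simp
      using YE' pY th0 apply (simp add: \<psi>_def fneg_def ins_def fzero_def)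
      using EE' pE apply (auto simp: \<psi>_def)
      done
  qed
  define \<theta>' where "\<theta>' x = fadd (\<theta> (p x)) (fscale (t x) \<gamma>)" for x
  have gY: "\<gamma> (Y # zs) = 0" for zs using g2 unfolding ins_def fzero_def by metis
  have gE: "\<gamma> (X # zs) = - \<theta> X (Y # zs)" if "X \<in> E" for X zs
    using g3[OF that] unfolding ins_def fneg_def by metis
  show ?thesis
  proof (intro exI conjI ballI)
    fix X assume "X \<in> span (insert Y E)"
    then show "is_kform (m - 1) (\<theta>' X)" unfolding \<theta>'_def E'_def[symmetric]
      using valp kform_fadd kform_fscale g1 by blast
  next
    show "linear_on (span (insert Y E)) \<theta>'"
      unfolding linear_on_def E'_def[symmetric]
    proof (intro conjI ballI allI)
      fix a b assume a: "a \<in> E'" and b: "b \<in> E'"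
      show "\<theta>' (a + b) = fadd (\<theta>' a) (\<theta>' b)"
        unfolding \<theta>'_def padd tadd linadd[OF pE'[OF a] pE'[OF b]]
        by (simp add: fadd_def fscale_def algebra_simps)
    next
      fix c a assume a: "a \<in> E'"
      show "\<theta>' (c *\<^sub>R a) = fscale c (\<theta>' a)"
        unfolding \<theta>'_def pscale tscale linscale[OF pE'[OF a]]
        by (simp add: fadd_def fscale_def algebra_simps)
    qed
  next
    show "E_skew (span (insert Y E)) \<theta>'"
      unfolding E_skew_def E'_def[symmetric]
    proof (intro ballI ext)
      fix a b zs assume a: "a \<in> E'" and b: "b \<in> E'"
      have A: "\<theta> (p a) (b # zs) = \<theta> (p a) (p b # zs) + t b * \<theta> (p a) (Y # zs)"
        using slot0[OF valp[OF a], of "p b" "t b" Y zs] decomp[of b] by simp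
      have B: "\<theta> (p b) (a # zs) = \<theta> (p b) (p a # zs) + t a * \<theta> (p b) (Y # zs)"
        using slot0[OF valp[OF b], of "p a" "t a" Y zs] decomp[of a] by simp
      have C: "\<gamma> (b # zs) = - \<theta> (p b) (Y # zs)"
        using slot0[OF g1, of "p b" "t b" Y zs] decomp[of b] gY gE[OF pE'[OF b]] by simp
      have D: "\<gamma> (a # zs) = - \<theta> (p a) (Y # zs)"
        using slot0[OF g1, of "p a" "t a" Y zs] decomp[of a] gY gE[OF pE'[OF a]] by simp
      have S: "\<theta> (p a) (p b # zs) = - \<theta> (p b) (p a # zs)" using skE[OF pE'[OF a] pE'[OF b]] .
      show "ins b (\<theta>' a) zs = fneg (ins a (\<theta>' b)) zs"
        unfolding \<theta>'_def by (simp add: ins_def fneg_def fadd_def fscale_def A B C D S algebra_simps)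
    qed
  next
    fix X assume X: "X \<in> E"
    show "\<theta>' X = \<theta> X" unfolding \<theta>'_def pE[OF X] tE[OF X]
      by (simp add: fadd_def fscale_def)
  qed
qed

lemma extend_all:
  fixes E :: "'v::euclidean_space set" and \<theta> :: "'v \<Rightarrow> 'v form"
  assumes m: "1 \<le> m"
    and IH: "2 \<le> m \<Longrightarrow> \<forall>E' \<psi>. extP (m - 1) (E' :: 'v set) \<psi>"
  shows "subspace E \<Longrightarrow> \<forall>X\<in>E. is_kform (m - 1) (\<theta> X) \<Longrightarrow> linear_on E \<theta> \<Longrightarrow> E_skew E \<theta> \<Longrightarrow>
    \<exists>\<theta>'. (\<forall>X. is_kform (m - 1) (\<theta>' X)) \<and> linear_on UNIV \<theta>' \<and> E_skew UNIV \<theta>' \<and> (\<forall>X\<in>E. \<theta>' X = \<theta> X)"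
proof (induction "DIM('v) - dim E" arbitrary: E \<theta>)
  case 0
  have "dim E = DIM('v)" using 0(1) dim_subset_UNIV[of E] by simp
  then have "span E = UNIV" using dim_eq_full by blast
  then have "E = UNIV" using span_eq_iff[THEN iffD2, OF 0(2)] by simp
  then show ?case using 0 by auto
next
  case (Suc n)
  have lt: "dim E < DIM('v)" using Suc(2) by simp
  obtain Y where Y: "Y \<noteq> 0" "\<And>y. y \<in> span E \<Longrightarrow> orthogonal Y y"
    using orthogonal_to_subspace_exists[OF lt] by blast
  have Yo: "\<And>y. y \<in> E \<Longrightarrow> Y \<bullet> y = 0" using Y(2) span_base unfolding orthogonal_def by blast
  have YnE: "Y \<notin> span E"
  proof
    assume "Y \<in> span E"
    then have "Y \<bullet> Y = 0" using Y(2) unfolding orthogonal_def by blast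
    then show False using Y(1) by simp
  qed
  obtain \<theta>1 where t1: "\<forall>X\<in>span (insert Y E). is_kform (m - 1) (\<theta>1 X)" "linear_on (span (insert Y E)) \<theta>1"
    "E_skew (span (insert Y E)) \<theta>1" "\<forall>X\<in>E. \<theta>1 X = \<theta> X"
    using ext_step[OF m IH Suc(3) Y(1) Yo Suc(4) Suc(5) Suc(6)] by blast
  have d: "dim (span (insert Y E)) = dim E + 1" using YnE by (simp add: dim_insert)
  have "n = DIM('v) - dim (span (insert Y E))" using Suc(2) d by simp
  from Suc(1)[OF this _ t1(1-3)] obtain \<theta>' where
    "(\<forall>X. is_kform (m - 1) (\<theta>' X)) \<and> linear_on UNIV \<theta>' \<and> E_skew UNIV \<theta>' \<and> (\<forall>X\<in>span (insert Y E). \<theta>' X = \<theta>1 X)"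
    by auto
  moreover have "E \<subseteq> span (insert Y E)" by (meson span_superset subset_insertI subset_trans)
  ultimately show ?case using t1(4) by (metis (no_types, lifting) subsetD)
qed

lemma extP_all0:
  fixes m :: nat
  shows "1 \<le> m \<Longrightarrow> \<forall>(E :: 'v::euclidean_space set) \<theta>. extP m E \<theta>"
proof (induction m rule: less_induct)
  case (less m)
  have IH: "2 \<le> m \<Longrightarrow> \<forall>E' \<psi>. extP (m - 1) (E' :: 'v set) \<psi>"
    using less(1) by auto
  show ?case
  proof (intro allI)
    fix E :: "'v set" and \<theta> :: "'v \<Rightarrow> 'v form"
    show "extP m E \<theta>" unfolding extP_def
    proof (intro impI)
      assume a: "subspace E" "\<forall>X\<in>E. is_kform (m - 1) (\<theta> X)" "linear_on E \<theta>" "E_skew E \<theta>"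
      obtain \<theta>' where t: "\<forall>X. is_kform (m - 1) (\<theta>' X)" "linear_on UNIV \<theta>'" "E_skew UNIV \<theta>'" "\<forall>X\<in>E. \<theta>' X = \<theta> X"
        using extend_all[OF less(2) IH a] by blast
      define \<beta> where "\<beta> = (\<lambda>xs. if length xs = m then \<theta>' (hd xs) (tl xs) else 0)"
      have "is_kform m \<beta>"
        unfolding \<beta>_def using direct_form[OF less(2) _ t(2) t(3)] t(1) by blast
      moreover have "\<forall>X\<in>E. ins X \<beta> = \<theta> X"
        unfolding \<beta>_def using direct_ins[of m \<theta>', OF less(2)] t(1) t(4) by simp
      ultimately show "\<exists>\<beta>. is_kform m \<beta> \<and> (\<forall>X\<in>E. ins X \<beta> = \<theta> X)" by blast
    qed
  qed
qed

theorem proposition3p12: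
  fixes L :: "('v::euclidean_space \<times> 'v form) set" and k :: nat
  assumes "1 \<le> k" and "k \<le> DIM('v) - 1"
    and "is_subspace k L"
    and "weakly_lagrangian k L"
    and "{\<eta>. (0, \<eta>) \<in> L} = {fzero}"
  shows "(\<exists>\<epsilon>. (\<forall>X\<in>pr1 L. \<epsilon> X \<in> kforms k) \<and> linear_on (pr1 L) \<epsilon> \<and>
              L = {(X, \<epsilon> X) | X. X \<in> pr1 L} \<and>
              E_skew (pr1 L) \<epsilon> \<and>
              ann (\<epsilon> ` pr1 L) = {X \<in> pr1 L. \<epsilon> X = fzero})
         \<and> (lagrangian k L \<longleftrightarrow> pr1 L = UNIV)"
proof -
  note k1 = assms(1)
  have Lsub: "L \<subseteq> UNIV \<times> kforms k" and L0: "(0, fzero) \<in> L"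
    and Ladd: "\<And>a b. a \<in> L \<Longrightarrow> b \<in> L \<Longrightarrow> (fst a + fst b, fadd (snd a) (snd b)) \<in> L"
    and Lsc: "\<And>c a. a \<in> L \<Longrightarrow> (c *\<^sub>R fst a, fscale c (snd a)) \<in> L"
    using assms(3) unfolding is_subspace_def by blast+
  have iso: "L \<subseteq> orth k L" and wl: "capV L = ann (pr2 L)"
    using assms(4) unfolding weakly_lagrangian_def isotropic_def by blast+
  have z: "\<And>\<eta>. (0, \<eta>) \<in> L \<Longrightarrow> \<eta> = fzero" using assms(5) by blast
  define E where "E = pr1 L"
  have Ei: "X \<in> E \<longleftrightarrow> (\<exists>\<eta>. (X, \<eta>) \<in> L)" for X unfolding E_def pr1_def by force
  have uniq: "\<eta> = \<eta>'" if "(X, \<eta>) \<in> L" "(X, \<eta>') \<in> L" for X \<eta> \<eta>'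
  proof -
    have "((-1) *\<^sub>R X, fscale (-1) \<eta>') \<in> L" using Lsc[OF that(2), of "-1"] by simp
    from Ladd[OF that(1) this] have "(0, fadd \<eta> (fscale (-1) \<eta>')) \<in> L" by simp
    then have "fadd \<eta> (fscale (-1) \<eta>') = fzero" by (rule z)
    then have "\<eta> xs - \<eta>' xs = 0" for xs unfolding fadd_def fscale_def fzero_def by (metis add_uminus_conv_diff mult_minus1)
    then show ?thesis by auto
  qed
  define \<epsilon> where "\<epsilon> X = (THE \<eta>. (X, \<eta>) \<in> L)" for X
  have memL: "(X, \<eta>) \<in> L \<longleftrightarrow> X \<in> E \<and> \<eta> = \<epsilon> X" for X \<eta>
  proof
    assume a: "(X, \<eta>) \<in> L"
    then have "\<epsilon> X = \<eta>" unfolding \<epsilon>_def using uniq by blast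
    then show "X \<in> E \<and> \<eta> = \<epsilon> X" using a Ei by blast
  next
    assume a: "X \<in> E \<and> \<eta> = \<epsilon> X"
    then obtain \<eta>0 where e: "(X, \<eta>0) \<in> L" using Ei by blast
    then have "\<epsilon> X = \<eta>0" unfolding \<epsilon>_def using uniq by blast
    then show "(X, \<eta>) \<in> L" using a e by simp
  qed
  have epsL: "X \<in> E \<Longrightarrow> (X, \<epsilon> X) \<in> L" for X using memL by blast
  have epsk: "X \<in> E \<Longrightarrow> is_kform k (\<epsilon> X)" for X using epsL Lsub unfolding kforms_def by blast
  have pair0: "pairing a b = fzero" if "a \<in> L" "b \<in> L" for a b
    using iso that unfolding orth_def by blast
  have skew: "\<epsilon> X (Z # zs) = - \<epsilon> Z (X # zs)" if "X \<in> E" "Z \<in> E" for X Z zs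
  proof -
    have "pairing (X, \<epsilon> X) (Z, \<epsilon> Z) = fzero" using pair0 epsL that by blast
    then have "\<epsilon> Z (X # zs) + \<epsilon> X (Z # zs) = 0"
      unfolding pairing_def fadd_def ins_def fzero_def by (metis fst_conv snd_conv)
    then show ?thesis by simp
  qed
  have lin: "linear_on E \<epsilon>"
    unfolding linear_on_def
  proof (intro conjI ballI allI)
    fix X Y assume "X \<in> E" "Y \<in> E"
    then have "(X + Y, fadd (\<epsilon> X) (\<epsilon> Y)) \<in> L" using Ladd[OF epsL epsL] by simp
    then show "\<epsilon> (X + Y) = fadd (\<epsilon> X) (\<epsilon> Y)" using memL[of "X + Y"] by simp
  next
    fix c X assume "X \<in> E"
    then have "(c *\<^sub>R X, fscale c (\<epsilon> X)) \<in> L" using Lsc[OF epsL] by simp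
    then show "\<epsilon> (c *\<^sub>R X) = fscale c (\<epsilon> X)" using memL[of "c *\<^sub>R X"] by simp
  qed
  have Leq: "L = {(X, \<epsilon> X) | X. X \<in> E}"
  proof (rule set_eqI)
    fix a :: "'v \<times> 'v form"
    show "a \<in> L \<longleftrightarrow> a \<in> {(X, \<epsilon> X) | X. X \<in> E}"
      using memL[of "fst a" "snd a"] by (cases a) auto
  qed
  have sk: "E_skew E \<epsilon>" unfolding E_skew_def
  proof (intro ballI ext)
    fix X Z zs assume "X \<in> E" "Z \<in> E"
    then show "ins Z (\<epsilon> X) zs = fneg (ins X (\<epsilon> Z)) zs"
      unfolding ins_def fneg_def using skew by blast
  qed
  have pr2: "pr2 L = \<epsilon> ` E"
  proof (rule set_eqI)
    fix \<eta>
    have "\<eta> \<in> pr2 L \<longleftrightarrow> (\<exists>X. (X, \<eta>) \<in> L)" unfolding pr2_def by force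
    also have "\<dots> \<longleftrightarrow> \<eta> \<in> \<epsilon> ` E" using memL by blast
    finally show "\<eta> \<in> pr2 L \<longleftrightarrow> \<eta> \<in> \<epsilon> ` E" .
  qed
  have capV: "capV L = {X \<in> E. \<epsilon> X = fzero}" unfolding capV_def using memL by (auto simp del: fzero_def)
  have part1: "(\<forall>X\<in>E. \<epsilon> X \<in> kforms k) \<and> linear_on E \<epsilon> \<and> L = {(X, \<epsilon> X) | X. X \<in> E} \<and>
              E_skew E \<epsilon> \<and> ann (\<epsilon> ` E) = {X \<in> E. \<epsilon> X = fzero}"
  proof (intro conjI)
    show "\<forall>X\<in>E. \<epsilon> X \<in> kforms k" using epsk unfolding kforms_def by blast
    show "ann (\<epsilon> ` E) = {X \<in> E. \<epsilon> X = fzero}" using wl pr2 capV by simp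
  qed (rule lin, rule Leq, rule sk)
  have part2: "lagrangian k L \<longleftrightarrow> E = UNIV"
  proof
    assume lag: "lagrangian k L"
    show "E = UNIV"
    proof (rule ccontr)
      assume "E \<noteq> UNIV"
      then obtain Y where Y: "Y \<notin> E" by blast
      have subE: "subspace E" unfolding subspace_def
      proof (intro conjI ballI allI)
        show "0 \<in> E" using Ei L0 by blast
      next
        fix X Z assume "X \<in> E" "Z \<in> E"
        then show "X + Z \<in> E" using Ladd[OF epsL epsL] Ei by fastforce
      next
        fix c X assume "X \<in> E"
        then show "c *\<^sub>R X \<in> E" using Lsc[OF epsL] Ei by fastforce
      qed
      define \<theta> where "\<theta> X = fneg (ins Y (\<epsilon> X))" for X
      have v: "\<forall>X\<in>E. is_kform (k - 1) (\<theta> X)"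
        unfolding \<theta>_def using epsk kform_ins kform_fneg k1 by blast
      have l: "linear_on E \<theta>" unfolding linear_on_def
      proof (intro conjI ballI allI)
        fix X Z assume "X \<in> E" "Z \<in> E"
        then have "\<epsilon> (X + Z) = fadd (\<epsilon> X) (\<epsilon> Z)" using lin unfolding linear_on_def by blast
        then show "\<theta> (X + Z) = fadd (\<theta> X) (\<theta> Z)" unfolding \<theta>_def
          by (simp add: fneg_def ins_def fadd_def)
      next
        fix c X assume "X \<in> E"
        then have "\<epsilon> (c *\<^sub>R X) = fscale c (\<epsilon> X)" using lin unfolding linear_on_def by blast
        then show "\<theta> (c *\<^sub>R X) = fscale c (\<theta> X)" unfolding \<theta>_def
          by (simp add: fneg_def ins_def fscale_def)
      qed
      have s: "E_skew E \<theta>" unfolding E_skew_def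
      proof (intro ballI ext)
        fix X Z zs assume X: "X \<in> E" and Z: "Z \<in> E"
        have "\<epsilon> X (Y # Z # zs) = - \<epsilon> X (Z # Y # zs)" by (rule swap01[OF epsk[OF X]])
        also have "\<dots> = \<epsilon> Z (X # Y # zs)" using skew[OF X Z] by simp
        also have "\<dots> = - \<epsilon> Z (Y # X # zs)" by (rule swap01[OF epsk[OF Z]])
        finally show "ins Z (\<theta> X) zs = fneg (ins X (\<theta> Z)) zs"
          unfolding \<theta>_def by (simp add: fneg_def ins_def)
      qed
      obtain \<beta> where b: "is_kform k \<beta>" "\<forall>X\<in>E. ins X \<beta> = \<theta> X"
        using extP_all0[OF k1, rule_format, of E \<theta>] subE v l s unfolding extP_def by auto
      have "(Y, \<beta>) \<in> orth k L"
        unfolding orth_def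
      proof (safe)
        show "\<beta> \<in> kforms k" using b(1) unfolding kforms_def by simp
      next
        fix X \<eta> assume "(X, \<eta>) \<in> L"
        then have X: "X \<in> E" and e: "\<eta> = \<epsilon> X" using memL by auto
        show "pairing (X, \<eta>) (Y, \<beta>) = fzero"
        proof
          fix zs
          have "ins X \<beta> = \<theta> X" using b(2) X by blast
          then have "\<beta> (X # zs) = - \<epsilon> X (Y # zs)" unfolding \<theta>_def ins_def fneg_def by metis
          then show "pairing (X, \<eta>) (Y, \<beta>) zs = fzero zs"
            unfolding pairing_def e by (simp add: fadd_def ins_def fzero_def)
        qed
      qed simp
      then have "(Y, \<beta>) \<in> L" using lag unfolding lagrangian_def by simp
      then show False using Y Ei by blast
    qed
  next
    assume EU: "E = UNIV"
    have "orth k L \<subseteq> L"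
    proof
      fix b assume b: "b \<in> orth k L"
      obtain Y \<beta> where bb: "b = (Y, \<beta>)" by (cases b)
      have bk: "is_kform k \<beta>" and bo: "\<forall>a\<in>L. pairing a (Y, \<beta>) = fzero"
        using b unfolding bb orth_def kforms_def by auto
      have YE: "Y \<in> E" using EU by simp
      have "\<beta> = \<epsilon> Y"
      proof
        fix xs :: "'v list"
        show "\<beta> xs = \<epsilon> Y xs"
        proof (cases "length xs = k")
          case False then show ?thesis using kform_zero[OF bk] kform_zero[OF epsk[OF YE]] by simp
        next
          case True
          then obtain X zs where xs: "xs = X # zs" using k1 by (cases xs) auto
          have XE: "X \<in> E" using EU by simp
          have "pairing (X, \<epsilon> X) (Y, \<beta>) = fzero" using bo epsL[OF XE] by blast
          then have "\<beta> (X # zs) + \<epsilon> X (Y # zs) = 0"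
            unfolding pairing_def fadd_def ins_def fzero_def by (metis fst_conv snd_conv)
          moreover have "\<epsilon> Y (X # zs) = - \<epsilon> X (Y # zs)" using skew[OF YE XE] .
          ultimately show ?thesis unfolding xs by simp
        qed
      qed
      then show "b \<in> L" using bb epsL[OF YE] by simp
    qed
    then show "lagrangian k L" using iso unfolding lagrangian_def by blast
  qed
  show ?thesis using part1 part2 unfolding E_def by blast
qed

end
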